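(* Let $W_t:\Omega\to(0,\infty)$, $t\in\mathbb{N}$, be random variables on a probability space, and suppose there is $\gamma_0<0$ such that $E[W_t^\gamma]<\infty$ for all $t\in\mathbb{N}$ and all $\gamma\in(\gamma_0,0)$. Let $$C:=\lim_{\gamma\to0^-}\liminf_{t\to\infty}\frac{1}{t}\,\frac{1}{\gamma}\log\big(E[W_t^\gamma]\big)$$ (the limit exists in $[-\infty,+\infty]$). Then $\liminf_{t\to\infty}\frac{1}{t}\log W_t\geq C$ almost surely. Moreover, if $C>0$, then the hitting times $T_b:=\inf\{t\in\mathbb{N}: W_t>b\}$, $b\in[0,\infty)$, are integrable and $$\limsup_{b\to+\infty}\frac{E[T_b]}{\log b}\leq\frac{1}{C}.$$
   Context: $\log$ is the natural logarithm; if $C=+\infty$ then $1/C:=0$. *)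

theory Defs
  imports "HOL-Probability.Probability"
begin

text \<open>Hitting time T_b = inf {t. W_t > b}, with inf of the empty set = +infinity
  (realised as the top element of ennreal).\<close>
definition hitting_time :: "(nat \<Rightarrow> 'a \<Rightarrow> real) \<Rightarrow> real \<Rightarrow> 'a \<Rightarrow> ennreal" where
  "hitting_time W b \<omega> = (INF t \<in> {t. W t \<omega> > b}. ennreal (real t))"

definition moment_rate :: "'a measure \<Rightarrow> (nat \<Rightarrow> 'a \<Rightarrow> real) \<Rightarrow> real \<Rightarrow> ereal" where
  "moment_rate M W \<gamma> =
     liminf (\<lambda>t. ereal (1 / real t * (1 / \<gamma>) * ln (integral\<^sup>L M (\<lambda>\<omega>. W t \<omega> powr \<gamma>))))"

end

theory Submission
  imports Defs
begin

lemma aux3: assumes "(g1::real) < g2" "g2 < 0" "g1 * L2 \<ge> g2 * L1" shows "1/g1 * L1 \<le> 1/g2 * L2" 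
proof -
  have gg: "g1*g2 > 0" using assms by (simp add: mult_neg_neg)
  have "(g2 * L1)/(g1*g2) \<le> (g1*L2)/(g1*g2)" using assms(3) gg by (intro divide_right_mono) auto
  thus ?thesis using assms by simp
qed
lemma aux2: assumes "(g1::real) < g2" "g2 < 0" "g1/g2 * L2 \<le> L1" shows "g1 * L2 \<ge> g2 * L1" 
proof -
  have "g2 * (g1/g2 * L2) \<ge> g2 * L1" using assms by (intro mult_left_mono_neg) auto
  thus ?thesis using assms by simp
qed
lemma aux1: assumes "(m2::real) > 0" "m1 > 0" "m2 powr p \<le> m1" shows "p * ln m2 \<le> ln m1" 
proof -
  have "ln (m2 powr p) \<le> ln m1" using assms by (subst ln_le_cancel_iff) auto
  thus ?thesis using assms by (simp add: ln_powr)
qed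

lemma int_pos:
  assumes "prob_space M" "integrable M f" "\<And>\<omega>. \<omega> \<in> space M \<Longrightarrow> f \<omega> > (0::real)"
  shows "integral\<^sup>L M f > 0"
proof -
  have ge: "integral\<^sup>L M f \<ge> 0" using assms by (intro integral_nonneg_AE) (auto intro: less_imp_le)
  have "integral\<^sup>L M f \<noteq> 0"
  proof
    assume "integral\<^sup>L M f = 0"
    then have "AE x in M. f x = 0" using assms integral_nonneg_eq_0_iff_AE[of M f]
      by (auto intro: less_imp_le)
    then have "AE x in M. False" using AE_space by eventually_elim (use assms in \<open>force\<close>)
    then show False using assms(1) prob_space.AE_False by blast
  qed
  with ge show ?thesis by simp
qed

lemma pm_mono:
  fixes X :: "'a \<Rightarrow> real"
  assumes P: "prob_space M" and X: "X \<in> borel_measurable M" and pos: "\<And>\<omega>. \<omega> \<in> space M \<Longrightarrow> X \<omega> > 0"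
    and g: "g1 < g2" "g2 < 0"
    and i1: "integrable M (\<lambda>\<omega>. X \<omega> powr g1)" and i2: "integrable M (\<lambda>\<omega>. X \<omega> powr g2)"
  shows "1/g1 * ln (integral\<^sup>L M (\<lambda>\<omega>. X \<omega> powr g1)) \<le> 1/g2 * ln (integral\<^sup>L M (\<lambda>\<omega>. X \<omega> powr g2))"
proof -
  define p where "p = g1/g2"
  have p1: "p \<ge> 1" using g unfolding p_def by fastforce
  define m1 where "m1 = integral\<^sup>L M (\<lambda>\<omega>. X \<omega> powr g1)"
  define m2 where "m2 = integral\<^sup>L M (\<lambda>\<omega>. X \<omega> powr g2)"
  have m1: "m1 > 0" unfolding m1_def by (rule int_pos[OF P i1]) (use pos in fastforce)
  have m2: "m2 > 0" unfolding m2_def by (rule int_pos[OF P i2]) (use pos in fastforce)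
  have eq: "(X \<omega> powr g2) powr p = X \<omega> powr g1" if "\<omega> \<in> space M" for \<omega>
    using g by (simp add: powr_powr p_def)
  have "m2 powr p \<le> m1"
  proof -
    have "(\<integral>\<omega>. X \<omega> powr g2 \<partial>M) powr p \<le> (\<integral>\<omega>. (X \<omega> powr g2) powr p \<partial>M)"
    proof (rule prob_space.jensens_inequality[OF P, where I="{0<..}" and a=0 and b=0])
      show "integrable M (\<lambda>x. X x powr g2)" by fact
      show "AE x in M. X x powr g2 \<in> {0<..}" using pos by (intro AE_I2) fastforce
      show "integrable M (\<lambda>x. (X x powr g2) powr p)"
      proof -
        have "integrable M (\<lambda>x. (X x powr g2) powr p) = integrable M (\<lambda>x. X x powr g1)"
          by (intro Bochner_Integration.integrable_cong refl eq)
        with i1 show ?thesis by simp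
      qed
      show "convex_on {0<..} (\<lambda>x. x powr p)" using p1 by (rule powr_convex)
    qed auto
    also have "\<dots> = m1" unfolding m1_def by (rule Bochner_Integration.integral_cong) (use eq in auto)
    finally show ?thesis unfolding m2_def .
  qed
  then have "p * ln m2 \<le> ln m1" using m1 m2 by (intro aux1)
  then have "g1 * ln m2 \<ge> g2 * ln m1" using g unfolding p_def by (intro aux2)
  then have "1/g1 * ln m1 \<le> 1/g2 * ln m2" using g by (intro aux3)
  then show ?thesis by (simp add: m1_def m2_def)
qed



locale mt = 
  fixes M :: "'a measure" and W :: "nat \<Rightarrow> 'a \<Rightarrow> real" and g0 :: real
  assumes P: "prob_space M"
    and meas[measurable]: "\<And>t. W t \<in> borel_measurable M"
    and pos: "\<And>t \<omega>. \<omega> \<in> space M \<Longrightarrow> W t \<omega> > 0"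
    and g0: "g0 < 0"
    and mom: "\<And>t \<gamma>. g0 < \<gamma> \<Longrightarrow> \<gamma> < 0 \<Longrightarrow> integrable M (\<lambda>\<omega>. W t \<omega> powr \<gamma>)"
begin

definition "m t g = integral\<^sup>L M (\<lambda>\<omega>. W t \<omega> powr g)"
definition "C = (SUP g\<in>{g0<..<0}. moment_rate M W g)"

lemma pos_ne: "\<omega> \<in> space M \<Longrightarrow> W t \<omega> \<noteq> 0"
  using pos[of \<omega> t] by simp

lemma m_pos: "g0 < g \<Longrightarrow> g < 0 \<Longrightarrow> m t g > 0"
  unfolding m_def by (rule int_pos[OF P mom]) (auto simp: pos_ne)

lemma R_mono:
  assumes "g0 < g1" "g1 \<le> g2" "g2 < 0"
  shows "moment_rate M W g1 \<le> moment_rate M W g2"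
proof (cases "g1 = g2")
  case False
  then have lt: "g1 < g2" using assms by simp
  show ?thesis unfolding moment_rate_def
  proof (intro Liminf_mono always_eventually allI)
    fix t
    have "1/g1 * ln (m t g1) \<le> 1/g2 * ln (m t g2)"
      unfolding m_def using assms lt by (intro pm_mono[OF P meas]) (auto intro: pos mom)
    then have "1 / real t * (1/g1 * ln (m t g1)) \<le> 1 / real t * (1/g2 * ln (m t g2))"
      by (intro mult_left_mono) auto
    then show "ereal (1 / real t * (1 / g1) * ln (integral\<^sup>L M (\<lambda>\<omega>. W t \<omega> powr g1)))
         \<le> ereal (1 / real t * (1 / g2) * ln (integral\<^sup>L M (\<lambda>\<omega>. W t \<omega> powr g2)))"
      by (simp add: m_def mult.assoc)
  qed
qed simp

lemma R_lim: "(moment_rate M W \<longlongrightarrow> C) (at_left 0)"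
proof (rule order_tendstoI)
  fix y assume "y < C"
  then obtain x where x: "x \<in> {g0<..<0}" "y < moment_rate M W x" unfolding C_def less_SUP_iff by blast
  have "eventually (\<lambda>z. z \<in> {x<..<0}) (at_left (0::real))" using x by (intro eventually_at_left_real) auto
  then show "eventually (\<lambda>z. y < moment_rate M W z) (at_left 0)"
  proof eventually_elim
    case (elim z)
    then have "moment_rate M W x \<le> moment_rate M W z" using x by (intro R_mono) auto
    then show ?case using x by simp
  qed
next
  fix y assume "C < y"
  have "eventually (\<lambda>z. z \<in> {g0<..<0}) (at_left (0::real))" using g0 by (intro eventually_at_left_real) auto
  then show "eventually (\<lambda>z. moment_rate M W z < y) (at_left 0)"
  proof eventually_elim
    case (elim z)
    then have "moment_rate M W z \<le> C" unfolding C_def by (intro SUP_upper)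
    then show ?case using \<open>C < y\<close> by simp
  qed
qed

lemma B:
  assumes "ereal c < C"
  shows "\<exists>g T. g0 < g \<and> g < 0 \<and> (\<forall>t\<ge>T. m t g \<le> exp (g * c * real t))"
proof -
  obtain g where g: "g \<in> {g0<..<0}" "ereal c < moment_rate M W g" using assms unfolding C_def less_SUP_iff by blast
  have "eventually (\<lambda>t. ereal c < ereal (1 / real t * (1 / g) * ln (m t g))) sequentially"
    using less_LiminfD[OF g(2)[unfolded moment_rate_def]] by (simp add: m_def)
  moreover have "eventually (\<lambda>t. t \<ge> (1::nat)) sequentially" by simp
  ultimately have "eventually (\<lambda>t. m t g \<le> exp (g * c * real t)) sequentially"
  proof eventually_elim
    case (elim t)
    have mp: "m t g > 0" using g by (intro m_pos) auto
    have tp: "real t > 0" using elim by simp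
    have "c < 1 / real t * (1 / g) * ln (m t g)" using elim by simp
    then have "c * real t < (1 / real t * (1 / g) * ln (m t g)) * real t" using tp by (rule mult_strict_right_mono)
    then have "c * real t < (1/g) * ln (m t g)" using tp by simp
    then have "g * (c * real t) > g * ((1/g) * ln (m t g))" using g by (intro mult_strict_left_mono_neg) auto
    then have "ln (m t g) < g * c * real t" using g by (simp add: mult.assoc)
    then have "exp (ln (m t g)) < exp (g * c * real t)" by simp
    then show ?case using mp by simp
  qed
  then show ?thesis using g unfolding eventually_sequentially by auto
qed

lemma markov:
  assumes "g0 < g" "g < 0" "x > 0"
  shows "measure M {\<omega>\<in>space M. W t \<omega> \<le> x} \<le> m t g / x powr g"
proof -
  interpret prob_space M by (rule P)
  have "measure M {\<omega>\<in>space M. W t \<omega> \<le> x} \<le> measure M {\<omega>\<in>space M. W t \<omega> powr g \<ge> x powr g}"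
    using assms pos by (intro finite_measure_mono) (auto intro: powr_mono2')
  also have "\<dots> \<le> (\<integral>\<omega>. W t \<omega> powr g \<partial>M) / x powr g"
    using assms by (intro integral_Markov_inequality_measure[where A="space M"] mom) auto
  finally show ?thesis by (simp add: m_def)
qed

end

context mt begin

lemma AE_c:
  assumes "ereal c < C"
  shows "AE \<omega> in M. ereal c \<le> liminf (\<lambda>t. ereal (1 / real t * ln (W t \<omega>)))"
proof -
  interpret prob_space M by (rule P)
  obtain c' where c': "ereal c < ereal c'" "ereal c' < C" using ereal_dense2[OF assms] by blast
  obtain g T where g: "g0 < g" "g < 0" and T: "\<And>t. t \<ge> T \<Longrightarrow> m t g \<le> exp (g * c' * real t)"
    using B[OF c'(2)] by blast
  define A where "A t = {\<omega>\<in>space M. W t \<omega> \<le> exp (c * real t)}" for t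
  define q where "q = exp (g * (c' - c))"
  have q: "q < 1" "q > 0" using g c' by (auto simp: q_def mult_neg_pos)
  have A_meas[measurable]: "A t \<in> sets M" for t unfolding A_def by measurable
  have bound: "measure M (A t) \<le> q ^ t" if "t \<ge> T" for t
  proof -
    have "measure M (A t) \<le> m t g / exp (c * real t) powr g"
      unfolding A_def by (intro markov g) auto
    also have "\<dots> = m t g / exp (g * c * real t)" by (simp add: powr_def)
    also have "\<dots> \<le> exp (g * c' * real t) / exp (g * c * real t)"
      by (intro divide_right_mono T that) auto
    also have "\<dots> = exp (real t * (g * (c' - c)))"
      by (simp add: exp_diff[symmetric] algebra_simps)
    also have "\<dots> = q ^ t" unfolding q_def by (rule exp_of_nat_mult)
    finally show ?thesis .
  qed
  have summ: "summable (\<lambda>t. measure M (A t))"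
    by (rule summable_comparison_test'[where N=T, OF summable_geometric[of q]]) (use q bound in auto)
  have "AE \<omega> in M. eventually (\<lambda>t. \<omega> \<in> space M - A t) sequentially"
    by (rule borel_cantelli_AE1) (auto simp: summ emeasure_finite less_top[symmetric])
  then show ?thesis
  proof eventually_elim
    case (elim \<omega>)
    have "eventually (\<lambda>t. ereal c \<le> ereal (1 / real t * ln (W t \<omega>))) sequentially"
      using elim eventually_ge_at_top[of "1::nat"]
    proof eventually_elim
      case (elim t)
      then have w: "W t \<omega> > exp (c * real t)" "\<omega> \<in> space M" by (auto simp: A_def)
      then have "ln (W t \<omega>) > c * real t" using pos[of \<omega> t] by (metis exp_less_cancel_iff exp_ln)
      then have "c * real t / real t \<le> ln (W t \<omega>) / real t" using elim by (intro divide_right_mono) auto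
      then show ?case using elim by simp
    qed
    then show ?case by (rule Liminf_bounded)
  qed
qed

lemma AE_C: "AE \<omega> in M. C \<le> liminf (\<lambda>t. ereal (1 / real t * ln (W t \<omega>)))"
proof -
  have "AE \<omega> in M. \<forall>r\<in>\<rat>. ereal r < C \<longrightarrow> ereal r \<le> liminf (\<lambda>t. ereal (1 / real t * ln (W t \<omega>)))"
    by (subst AE_ball_countable[OF countable_rat]) (intro ballI AE_impI AE_c)
  then show ?thesis
  proof eventually_elim
    case (elim \<omega>)
    show ?case
    proof (rule dense_le)
      fix y assume "y < C"
      obtain r1 where r1: "y < ereal r1" "ereal r1 < C" using ereal_dense2[OF \<open>y < C\<close>] by blast
      obtain r2 where r2: "ereal r1 < ereal r2" "ereal r2 < C" using ereal_dense2[OF r1(2)] by blast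
      obtain r where r: "r \<in> \<rat>" "r1 < r" "r < r2" using Rats_dense_in_real[of r1 r2] r2 by auto
      have "ereal r < C" using r r2 by (meson ereal_less_eq(3) less_imp_le order_le_less_trans)
      with elim r have "ereal r \<le> liminf (\<lambda>t. ereal (1 / real t * ln (W t \<omega>)))" by auto
      moreover have "y \<le> ereal r" using r r1 by (metis ereal_less_eq(3) less_imp_le order_trans)
      ultimately show "y \<le> liminf (\<lambda>t. ereal (1 / real t * ln (W t \<omega>)))" by (rule order_trans[rotated])
    qed
  qed
qed

end


lemma HT_alt: "hitting_time W b = (\<lambda>\<omega>. INF t. if b < W t \<omega> then ennreal (real t) else top)"
proof
  fix \<omega>
  show "hitting_time W b \<omega> = (INF t. if b < W t \<omega> then ennreal (real t) else top)"
    unfolding hitting_time_def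
  proof (rule antisym)
    show "(INF t\<in>{t. b < W t \<omega>}. ennreal (real t)) \<le> (INF t. if b < W t \<omega> then ennreal (real t) else top)"
      by (rule INF_greatest) (auto intro: INF_lower)
    show "(INF t. if b < W t \<omega> then ennreal (real t) else top) \<le> (INF t\<in>{t. b < W t \<omega>}. ennreal (real t))"
    proof (rule INF_greatest)
      fix t assume "t \<in> {t. b < W t \<omega>}"
      then show "(INF t. if b < W t \<omega> then ennreal (real t) else top) \<le> ennreal (real t)"
        by (intro INF_lower2[where i=t]) auto
    qed
  qed
qed

lemma nat_le_top: "(\<And>n. of_nat n \<le> (x::ennreal)) \<Longrightarrow> x = top"
  using ennreal_Ex_less_of_nat[of x] by (metis leD top.not_eq_extremum)

lemma HT_le:
  "hitting_time W b \<omega> \<le> (\<Sum>t. (if W t \<omega> \<le> b then 1 else 0 :: ennreal))"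
proof -
  let ?f = "\<lambda>t. (if W t \<omega> \<le> b then 1 else 0 :: ennreal)"
  have key: "of_nat n \<le> (\<Sum>t. ?f t)" if "\<forall>t<n. W t \<omega> \<le> b" for n
  proof -
    have "sum ?f {..<n} = of_nat n" using that by simp
    moreover have "sum ?f {..<n} \<le> (\<Sum>t. ?f t)" by (rule sum_le_suminf) (auto intro: summableI)
    ultimately show ?thesis by simp
  qed
  show ?thesis
  proof (cases "\<exists>t. b < W t \<omega>")
    case False
    then have "(\<Sum>t. ?f t) = top" by (intro nat_le_top key) (auto simp: not_less)
    then show ?thesis by simp
  next
    case True
    define n where "n = (LEAST t. b < W t \<omega>)"
    have n: "b < W n \<omega>" unfolding n_def using True by (metis LeastI)
    have lt: "\<forall>t<n. W t \<omega> \<le> b" unfolding n_def using not_less_Least by (metis not_less)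
    have "hitting_time W b \<omega> \<le> ennreal (real n)" unfolding hitting_time_def using n by (intro INF_lower) auto
    also have "\<dots> = of_nat n" by (simp add: ennreal_of_nat_eq_real_of_nat)
    also have "\<dots> \<le> (\<Sum>t. ?f t)" using key lt by blast
    finally show ?thesis .
  qed
qed

context mt begin

lemma HT_meas: "hitting_time W b \<in> borel_measurable M"
  unfolding HT_alt by measurable

lemma HT_int: "(\<integral>\<^sup>+\<omega>. hitting_time W b \<omega> \<partial>M) \<le> (\<Sum>t. emeasure M {\<omega>\<in>space M. W t \<omega> \<le> b})"
proof -
  have "(\<integral>\<^sup>+\<omega>. hitting_time W b \<omega> \<partial>M) \<le> (\<integral>\<^sup>+\<omega>. (\<Sum>t. indicator {\<omega>\<in>space M. W t \<omega> \<le> b} \<omega>) \<partial>M)"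
    by (intro nn_integral_mono order_trans[OF HT_le] suminf_le) (auto intro: summableI)
  also have "\<dots> = (\<Sum>t. (\<integral>\<^sup>+\<omega>. indicator {\<omega>\<in>space M. W t \<omega> \<le> b} \<omega> \<partial>M))"
    by (rule nn_integral_suminf) measurable
  also have "\<dots> = (\<Sum>t. emeasure M {\<omega>\<in>space M. W t \<omega> \<le> b})"
    by (subst nn_integral_indicator) auto
  finally show ?thesis .
qed

end

context mt begin

lemma sum_bound:
  assumes c: "c > 0" and g: "g0 < g" "g < 0" and T: "\<And>t. t \<ge> T \<Longrightarrow> m t g \<le> exp (g * c * real t)"
    and B: "B \<ge> 1" "b \<le> B"
  shows "(\<Sum>t. emeasure M {\<omega>\<in>space M. W t \<omega> \<le> b}) \<le> ennreal (real T + real (nat \<lceil>ln B / c\<rceil>) + 1 / (1 - exp (g * c)))"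
proof -
  interpret prob_space M by (rule P)
  define q where "q = exp (g * c)"
  have q: "q < 1" "q > 0" using g c by (auto simp: q_def mult_neg_pos)
  define N where "N = T + nat \<lceil>ln B / c\<rceil>"
  define h where "h t = (if t < N then 1 else q ^ (t - N))" for t
  have NB: "c * real N \<ge> ln B"
  proof -
    have "ln B / c \<le> real (nat \<lceil>ln B / c\<rceil>)" by linarith
    also have "\<dots> \<le> real N" unfolding N_def by simp
    finally show ?thesis using c by (simp add: field_simps)
  qed
  have trm: "measure M {\<omega>\<in>space M. W t \<omega> \<le> b} \<le> h t" for t
  proof -
    have "measure M {\<omega>\<in>space M. W t \<omega> \<le> b} \<le> measure M {\<omega>\<in>space M. W t \<omega> \<le> B}"
      using B by (intro finite_measure_mono) auto
    also have "\<dots> \<le> h t"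
    proof (cases "t < N")
      case True then show ?thesis by (simp add: h_def)
    next
      case False
      then have tT: "t \<ge> T" unfolding N_def by simp
      have "measure M {\<omega>\<in>space M. W t \<omega> \<le> B} \<le> m t g / B powr g"
        using B g by (intro markov) auto
      also have "\<dots> = m t g / exp (g * ln B)" using B by (simp add: powr_def mult.commute)
      also have "\<dots> \<le> exp (g * c * real t) / exp (g * ln B)"
        by (intro divide_right_mono T tT) auto
      also have "\<dots> = exp (g * (c * real t - ln B))" by (simp add: exp_diff[symmetric] algebra_simps)
      also have "\<dots> \<le> exp (g * (c * (real t - real N)))"
        using NB g by (intro exp_le_cancel_iff[THEN iffD2] mult_left_mono_neg) (auto simp: algebra_simps)
      also have "\<dots> = exp (real (t - N) * (g * c))" using False by (simp add: of_nat_diff algebra_simps)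
      also have "\<dots> = h t" using False exp_of_nat_mult[of "t - N" "g * c"] by (simp add: h_def q_def)
      finally show ?thesis .
    qed
    finally show ?thesis .
  qed
  have hs: "h sums (1 / (1 - q) + real N)"
  proof -
    have "(\<lambda>i. h (i + N)) sums (1 / (1 - q))" unfolding h_def using q by (simp add: geometric_sums)
    moreover have "(\<Sum>i<N. h i) = real N" by (simp add: h_def)
    ultimately show ?thesis by (simp add: sums_iff_shift)
  qed
  have h0: "h t \<ge> 0" for t using q by (simp add: h_def)
  have "(\<Sum>t. emeasure M {\<omega>\<in>space M. W t \<omega> \<le> b}) = (\<Sum>t. ennreal (measure M {\<omega>\<in>space M. W t \<omega> \<le> b}))"
    by (simp add: emeasure_eq_measure)
  also have "\<dots> \<le> (\<Sum>t. ennreal (h t))"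
    by (intro suminf_le ennreal_leI trm) (auto intro: summableI)
  also have "\<dots> = ennreal (\<Sum>t. h t)" using hs h0 by (intro suminf_ennreal2) (auto simp: sums_summable)
  also have "\<dots> = ennreal (1 / (1 - q) + real N)" using hs by (simp add: sums_unique[symmetric])
  finally show ?thesis by (simp add: N_def q_def add.commute)
qed

end

context mt begin

lemma fin:
  assumes "C > 0" "b \<ge> 0"
  shows "(\<integral>\<^sup>+ \<omega>. hitting_time W b \<omega> \<partial>M) < \<infinity>"
proof -
  obtain c where c: "0 < ereal c" "ereal c < C" using ereal_dense2[OF assms(1)] by auto
  obtain g T where g: "g0 < g" "g < 0" and T: "\<And>t. t \<ge> T \<Longrightarrow> m t g \<le> exp (g * c * real t)"
    using B[OF c(2)] by blast
  have "(\<integral>\<^sup>+ \<omega>. hitting_time W b \<omega> \<partial>M) \<le> (\<Sum>t. emeasure M {\<omega>\<in>space M. W t \<omega> \<le> b})" by (rule HT_int)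
  also have "\<dots> \<le> ennreal (real T + real (nat \<lceil>ln (max b 1) / c\<rceil>) + 1 / (1 - exp (g * c)))"
    using c by (intro sum_bound g T) auto
  also have "\<dots> < \<infinity>" by simp
  finally show ?thesis .
qed

lemma lim_c:
  assumes c: "0 < c" "ereal c < C"
  shows "Limsup at_top (\<lambda>b::real. ereal (enn2real (\<integral>\<^sup>+ \<omega>. hitting_time W b \<omega> \<partial>M) / ln b)) \<le> ereal (1 / c)"
proof -
  obtain g T where g: "g0 < g" "g < 0" and T: "\<And>t. t \<ge> T \<Longrightarrow> m t g \<le> exp (g * c * real t)"
    using B[OF c(2)] by blast
  define K where "K = real T + 1 + 1 / (1 - exp (g * c))"
  have q: "exp (g * c) < 1" using g c by (auto simp: mult_neg_pos)
  have ev: "eventually (\<lambda>b::real. ereal (enn2real (\<integral>\<^sup>+ \<omega>. hitting_time W b \<omega> \<partial>M) / ln b) \<le> ereal (1/c + K / ln b)) at_top"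
    using eventually_ge_at_top[of "exp 1"]
  proof eventually_elim
    case (elim b)
    have b1: "b \<ge> 1" using elim exp_ge_add_one_self[of 1] by linarith
    have lnb: "ln b \<ge> 1" using elim b1 by (metis exp_gt_zero ln_exp ln_le_cancel_iff order_less_le_trans zero_less_one)
    have "(\<integral>\<^sup>+ \<omega>. hitting_time W b \<omega> \<partial>M) \<le> (\<Sum>t. emeasure M {\<omega>\<in>space M. W t \<omega> \<le> b})" by (rule HT_int)
    also have "\<dots> \<le> ennreal (real T + real (nat \<lceil>ln b / c\<rceil>) + 1 / (1 - exp (g * c)))"
      using c b1 by (intro sum_bound g T) auto
    finally have E: "enn2real (\<integral>\<^sup>+ \<omega>. hitting_time W b \<omega> \<partial>M) \<le> real T + real (nat \<lceil>ln b / c\<rceil>) + 1 / (1 - exp (g * c))"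
      using q by (intro enn2real_leI) (auto intro: add_nonneg_nonneg)
    have "ln b / c \<ge> 0" using lnb c by simp
    then have "real (nat \<lceil>ln b / c\<rceil>) \<le> ln b / c + 1" by linarith
    with E have "enn2real (\<integral>\<^sup>+ \<omega>. hitting_time W b \<omega> \<partial>M) \<le> ln b / c + K" unfolding K_def by linarith
    then have "enn2real (\<integral>\<^sup>+ \<omega>. hitting_time W b \<omega> \<partial>M) / ln b \<le> (ln b / c + K) / ln b"
      using lnb by (intro divide_right_mono) auto
    also have "\<dots> = 1/c + K / ln b" using lnb by (simp add: field_simps)
    finally show ?case by simp
  qed
  have lim: "((\<lambda>b::real. ereal (1/c + K / ln b)) \<longlongrightarrow> ereal (1/c)) at_top"
  proof (intro tendsto_ereal)
    have "((\<lambda>b::real. K / ln b) \<longlongrightarrow> 0) at_top"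
      by (intro tendsto_divide_0[OF tendsto_const] filterlim_at_top_imp_at_infinity ln_at_top)
    then show "((\<lambda>b::real. 1/c + K / ln b) \<longlongrightarrow> 1/c) at_top"
      using tendsto_add[OF tendsto_const, of _ 0 at_top "1/c"] by simp
  qed
  have "Limsup at_top (\<lambda>b::real. ereal (enn2real (\<integral>\<^sup>+ \<omega>. hitting_time W b \<omega> \<partial>M) / ln b))
        \<le> Limsup at_top (\<lambda>b::real. ereal (1/c + K / ln b))" by (rule Limsup_mono[OF ev])
  also have "\<dots> = ereal (1/c)" by (rule lim_imp_Limsup[OF _ lim]) simp
  finally show ?thesis .
qed

lemma lim_C:
  assumes "C > 0"
  shows "Limsup at_top (\<lambda>b::real. ereal (enn2real (\<integral>\<^sup>+ \<omega>. hitting_time W b \<omega> \<partial>M) / ln b)) \<le> 1 / C"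
proof (rule dense_ge)
  fix x assume x: "1 / C < x"
  show "Limsup at_top (\<lambda>b::real. ereal (enn2real (\<integral>\<^sup>+ \<omega>. hitting_time W b \<omega> \<partial>M) / ln b)) \<le> x"
  proof (cases x)
    case (real r)
    have r0: "r > 0" using x real assms by (cases C) (auto simp: divide_ereal_def split: if_splits, meson less_trans positive_imp_inverse_positive)
    have rC: "ereal (1/r) < C" using x real assms r0 by (cases C) (auto simp: divide_ereal_def field_simps split: if_splits)
    have "Limsup at_top (\<lambda>b::real. ereal (enn2real (\<integral>\<^sup>+ \<omega>. hitting_time W b \<omega> \<partial>M) / ln b)) \<le> ereal (1 / (1/r))"
      using r0 rC by (intro lim_c) auto
    then show ?thesis using real by simp
  qed (use x in auto)
qed

end

theorem mainTheorem9:
  fixes M :: "'a measure" and W :: "nat \<Rightarrow> 'a \<Rightarrow> real" and \<gamma>\<^sub>0 :: real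
  assumes "prob_space M"
    and meas: "\<And>t. W t \<in> borel_measurable M"
    and pos: "\<And>t \<omega>. \<omega> \<in> space M \<Longrightarrow> W t \<omega> > 0"
    and "\<gamma>\<^sub>0 < 0"
    and mom: "\<And>t \<gamma>. \<gamma>\<^sub>0 < \<gamma> \<Longrightarrow> \<gamma> < 0 \<Longrightarrow> integrable M (\<lambda>\<omega>. W t \<omega> powr \<gamma>)"
  shows "\<exists>C :: ereal.
           (moment_rate M W \<longlongrightarrow> C) (at_left 0) \<and>
           (AE \<omega> in M. liminf (\<lambda>t. ereal (1 / real t * ln (W t \<omega>))) \<ge> C) \<and>
           (C > 0 \<longrightarrow>
              (\<forall>b\<ge>0. hitting_time W b \<in> borel_measurable M \<and>
                      (\<integral>\<^sup>+ \<omega>. hitting_time W b \<omega> \<partial>M) < \<infinity>) \<and>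
              Limsup at_top (\<lambda>b::real. ereal (enn2real (\<integral>\<^sup>+ \<omega>. hitting_time W b \<omega> \<partial>M) / ln b))
                \<le> 1 / C)"
  proof -
  interpret mt M W "\<gamma>\<^sub>0" by (rule mt.intro[OF assms])
  have 1: "(moment_rate M W \<longlongrightarrow> C) (at_left 0)" by (rule R_lim)
  have 2: "AE \<omega> in M. liminf (\<lambda>t. ereal (1 / real t * ln (W t \<omega>))) \<ge> C" by (rule AE_C)
  have 3: "C > 0 \<longrightarrow>
              (\<forall>b\<ge>0. hitting_time W b \<in> borel_measurable M \<and>
                      (\<integral>\<^sup>+ \<omega>. hitting_time W b \<omega> \<partial>M) < \<infinity>) \<and>
              Limsup at_top (\<lambda>b::real. ereal (enn2real (\<integral>\<^sup>+ \<omega>. hitting_time W b \<omega> \<partial>M) / ln b))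
                \<le> 1 / C"
  proof (intro impI conjI allI)
    assume Cp: "C > 0"
    fix b :: real assume b: "b \<ge> 0"
    show "hitting_time W b \<in> borel_measurable M" by (rule HT_meas)
    show "(\<integral>\<^sup>+ \<omega>. hitting_time W b \<omega> \<partial>M) < \<infinity>" by (rule fin[OF Cp b])
  next
    assume Cp: "C > 0"
    show "Limsup at_top (\<lambda>b::real. ereal (enn2real (\<integral>\<^sup>+ \<omega>. hitting_time W b \<omega> \<partial>M) / ln b)) \<le> 1 / C"
      by (rule lim_C[OF Cp])
  qed
  show ?thesis by (rule exI[of _ C]) (intro conjI; fact)
qed


end
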